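(* Let $\mathbb{R}$ be the real line with the distance $d(x,y)=|x-y|$, and let $\mathcal C\subseteq\mathrm{age}(\mathbb{R})$ be an ideal. Then $\mathcal C$ has the $2$-amalgamation property if and only if there is a homogeneous metric space $\mathbb D$ with $\mathrm{age}(\mathbb D)=\mathcal C$. Moreover, if $\mathcal C$ contains at least one $3$-element metric space, then such a $\mathbb D$ can be taken to be $(G,d_{\restriction G})$ where $G$ is an additive subgroup of $\mathbb{R}$ and $d_{\restriction G}$ is the restriction of $d$.
   Context: Finite metric spaces are considered up to isometry and ordered by isometric embeddability; the age of a metric space is the set of isometry types of its finite subspaces; an ideal is a non-empty, downward closed, up-directed set of such isometry types. $\mathcal C$ has the $2$-amalgamation property if for all isometric embeddings $f_1:\mathbb A\to\mathbb A_1$, $f_2:\mathbb A\to\mathbb A_2$ between finite metric spaces with isometry types in $\mathcal C$ and $|\mathbb A|\le 2$, there exist a finite metric space $\mathbb B$ with type in $\mathcal C$ and isometric embeddings $g_1:\mathbb A_1\to\mathbb B$, $g_2:\mathbb A_2\to\mathbb B$ with $g_1\circ f_1=g_2\circ f_2$. A metric space $\mathbb D$ is homogeneous if every isometry between finite subspaces of $\mathbb D$ extends to an isometry of $\mathbb D$ onto itself. *)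

theory Defs
  imports Main "HOL-Analysis.Analysis"
begin

definition metric_on :: "'a set \<Rightarrow> ('a \<Rightarrow> 'a \<Rightarrow> real) \<Rightarrow> bool" where
  "metric_on M d \<longleftrightarrow>
     (\<forall>x\<in>M. \<forall>y\<in>M. 0 \<le> d x y \<and> d x y = d y x \<and> (d x y = 0 \<longleftrightarrow> x = y)) \<and>
     (\<forall>x\<in>M. \<forall>y\<in>M. \<forall>z\<in>M. d x z \<le> d x y + d y z)"

text \<open>Representatives of isometry types of finite metric spaces: finite metric
  spaces whose carrier is a set of natural numbers.\<close>
type_synonym fms = "nat set \<times> (nat \<Rightarrow> nat \<Rightarrow> real)"

definition fin_mspace :: "fms \<Rightarrow> bool" where
  "fin_mspace X \<longleftrightarrow> finite (fst X) \<and> metric_on (fst X) (snd X)"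

definition isom_emb :: "('a \<Rightarrow> 'b) \<Rightarrow> 'a set \<Rightarrow> ('a \<Rightarrow> 'a \<Rightarrow> real)
    \<Rightarrow> 'b set \<Rightarrow> ('b \<Rightarrow> 'b \<Rightarrow> real) \<Rightarrow> bool" where
  "isom_emb f A d B e \<longleftrightarrow> f ` A \<subseteq> B \<and> (\<forall>x\<in>A. \<forall>y\<in>A. e (f x) (f y) = d x y)"

definition isometry :: "('a \<Rightarrow> 'b) \<Rightarrow> 'a set \<Rightarrow> ('a \<Rightarrow> 'a \<Rightarrow> real)
    \<Rightarrow> 'b set \<Rightarrow> ('b \<Rightarrow> 'b \<Rightarrow> real) \<Rightarrow> bool" where
  "isometry f A d B e \<longleftrightarrow> bij_betw f A B \<and> (\<forall>x\<in>A. \<forall>y\<in>A. e (f x) (f y) = d x y)"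

definition embeds :: "fms \<Rightarrow> fms \<Rightarrow> bool" where
  "embeds X Y \<longleftrightarrow> (\<exists>f. isom_emb f (fst X) (snd X) (fst Y) (snd Y))"

definition age :: "'a set \<Rightarrow> ('a \<Rightarrow> 'a \<Rightarrow> real) \<Rightarrow> fms set" where
  "age M d = {X. fin_mspace X \<and>
      (\<exists>S. S \<subseteq> M \<and> finite S \<and> (\<exists>f. isometry f (fst X) (snd X) S d))}"

text \<open>An ideal: non-empty, downward closed, up-directed.  Downward closure
  also makes the class closed under isometry, so it is a set of isometry types.\<close>
definition ideal_fms :: "fms set \<Rightarrow> bool" where
  "ideal_fms C \<longleftrightarrow> C \<noteq> {} \<and> (\<forall>X\<in>C. fin_mspace X) \<and>
     (\<forall>X\<in>C. \<forall>Y. fin_mspace Y \<and> embeds Y X \<longrightarrow> Y \<in> C) \<and>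
     (\<forall>X\<in>C. \<forall>Y\<in>C. \<exists>Z\<in>C. embeds X Z \<and> embeds Y Z)"

definition amalg2 :: "fms set \<Rightarrow> bool" where
  "amalg2 C \<longleftrightarrow>
    (\<forall>A\<in>C. \<forall>A1\<in>C. \<forall>A2\<in>C. \<forall>f1 f2.
       card (fst A) \<le> 2 \<and>
       isom_emb f1 (fst A) (snd A) (fst A1) (snd A1) \<and>
       isom_emb f2 (fst A) (snd A) (fst A2) (snd A2) \<longrightarrow>
       (\<exists>B\<in>C. \<exists>g1 g2.
          isom_emb g1 (fst A1) (snd A1) (fst B) (snd B) \<and>
          isom_emb g2 (fst A2) (snd A2) (fst B) (snd B) \<and>
          (\<forall>x\<in>fst A. g1 (f1 x) = g2 (f2 x))))"

definition homogeneous :: "'a set \<Rightarrow> ('a \<Rightarrow> 'a \<Rightarrow> real) \<Rightarrow> bool" where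
  "homogeneous M d \<longleftrightarrow> metric_on M d \<and>
     (\<forall>S T h. S \<subseteq> M \<and> T \<subseteq> M \<and> finite S \<and> finite T \<and> isometry h S d T d \<longrightarrow>
        (\<exists>g. isometry g M d M d \<and> (\<forall>x\<in>S. g x = h x)))"

definition dR :: "real \<Rightarrow> real \<Rightarrow> real" where
  "dR x y = \<bar>x - y\<bar>"

definition additive_subgroup :: "real set \<Rightarrow> bool" where
  "additive_subgroup G \<longleftrightarrow> 0 \<in> G \<and> (\<forall>x\<in>G. \<forall>y\<in>G. x + y \<in> G) \<and> (\<forall>x\<in>G. - x \<in> G)"

end

theory Submission
  imports Defs
begin


lemma affine_of_dist:
  fixes f :: "real \<Rightarrow> real"
  assumes "\<forall>x\<in>S. \<forall>y\<in>S. \<bar>f x - f y\<bar> = \<bar>x - y\<bar>"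
  shows "\<exists>e c. (e = 1 \<or> e = -1) \<and> (\<forall>x\<in>S. f x = e * x + c)"
proof (cases "\<exists>a\<in>S. \<exists>b\<in>S. a \<noteq> b")
  case False
  show ?thesis
  proof (cases "S = {}")
    case True then show ?thesis by auto
  next
    case F: False
    then obtain a where a: "a \<in> S" by auto
    with False have "\<forall>x\<in>S. x = a" by auto
    then show ?thesis by (intro exI[of _ 1] exI[of _ "f a - a"]) auto
  qed
next
  case True
  then obtain a b where ab: "a \<in> S" "b \<in> S" "a \<noteq> b" by auto
  have hab: "\<bar>f b - f a\<bar> = \<bar>b - a\<bar>" using assms ab by auto
  have "f b - f a = 1 * (b - a) \<or> f b - f a = -1 * (b - a)" using hab by (auto simp: abs_if split: if_splits)
  then obtain e where e: "e = 1 \<or> e = -1" "f b - f a = e * (b - a)" by blast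
  have "\<forall>x\<in>S. f x = e * x + (f a - e * a)"
  proof
    fix x assume x: "x \<in> S"
    have 1: "\<bar>f x - f a\<bar> = \<bar>x - a\<bar>" and 2: "\<bar>f x - f b\<bar> = \<bar>x - b\<bar>" using assms x ab by auto
    from e(1) show "f x = e * x + (f a - e * a)"
    proof
      assume "e = 1" then show ?thesis using 1 2 e(2) ab(3) by (auto simp: abs_if split: if_splits)
    next
      assume "e = -1" then show ?thesis using 1 2 e(2) ab(3) by (auto simp: abs_if split: if_splits)
    qed
  qed
  then show ?thesis using e(1) by blast
qed

definition good :: "fms set \<Rightarrow> real set \<Rightarrow> bool" where
  "good C W \<longleftrightarrow> finite W \<and> (\<exists>X\<in>C. \<exists>f. isometry f (fst X) (snd X) W dR)"

lemma metric_on_subset: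
  assumes m: "metric_on M d" and s: "N \<subseteq> M"
  shows "metric_on N d"
proof -
  have 1: "\<forall>x\<in>M. \<forall>y\<in>M. 0 \<le> d x y \<and> d x y = d y x \<and> (d x y = 0 \<longleftrightarrow> x = y)"
    and 2: "\<forall>x\<in>M. \<forall>y\<in>M. \<forall>z\<in>M. d x z \<le> d x y + d y z"
    using m unfolding metric_on_def by simp_all
  have "\<forall>x\<in>N. \<forall>y\<in>N. 0 \<le> d x y \<and> d x y = d y x \<and> (d x y = 0 \<longleftrightarrow> x = y)"
  proof (intro ballI)
    fix x y assume "x \<in> N" "y \<in> N"
    then have "x \<in> M" "y \<in> M" using s by auto
    then show "0 \<le> d x y \<and> d x y = d y x \<and> (d x y = 0 \<longleftrightarrow> x = y)" using 1 by (rule_tac bspec[OF bspec[OF 1]])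
  qed
  moreover have "\<forall>x\<in>N. \<forall>y\<in>N. \<forall>z\<in>N. d x z \<le> d x y + d y z"
  proof (intro ballI)
    fix x y z assume "x \<in> N" "y \<in> N" "z \<in> N"
    then have "x \<in> M" "y \<in> M" "z \<in> M" using s by auto
    then show "d x z \<le> d x y + d y z" using 2 by blast
  qed
  ultimately show ?thesis unfolding metric_on_def by blast
qed

lemma metric_on_pull:
  assumes m: "metric_on M d" and i: "inj_on \<sigma> N" and s: "\<sigma> ` N \<subseteq> M"
  shows "metric_on N (\<lambda>i j. d (\<sigma> i) (\<sigma> j))"
  unfolding metric_on_def
proof (intro conjI ballI)
  fix x y assume xy: "x \<in> N" "y \<in> N"
  then have "\<sigma> x \<in> M" "\<sigma> y \<in> M" using s by auto
  then have 1: "0 \<le> d (\<sigma> x) (\<sigma> y) \<and> d (\<sigma> x) (\<sigma> y) = d (\<sigma> y) (\<sigma> x) \<and>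
    (d (\<sigma> x) (\<sigma> y) = 0 \<longleftrightarrow> \<sigma> x = \<sigma> y)"
    using m unfolding metric_on_def by blast
  have "\<sigma> x = \<sigma> y \<longleftrightarrow> x = y" using i xy unfolding inj_on_def by blast
  then show "0 \<le> d (\<sigma> x) (\<sigma> y)" "d (\<sigma> x) (\<sigma> y) = d (\<sigma> y) (\<sigma> x)"
    "(d (\<sigma> x) (\<sigma> y) = 0) = (x = y)" using 1 by blast+
next
  fix x y z assume xy: "x \<in> N" "y \<in> N" "z \<in> N"
  then have "\<sigma> x \<in> M" "\<sigma> y \<in> M" "\<sigma> z \<in> M" using s by auto
  then show "d (\<sigma> x) (\<sigma> z) \<le> d (\<sigma> x) (\<sigma> y) + d (\<sigma> y) (\<sigma> z)"
    using m unfolding metric_on_def by blast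
qed

lemma ideal_down: "ideal_fms C \<Longrightarrow> X \<in> C \<Longrightarrow> fin_mspace Y \<Longrightarrow> isom_emb k (fst Y) (snd Y) (fst X) (snd X) \<Longrightarrow> Y \<in> C"
  unfolding ideal_fms_def embeds_def by blast

lemma ideal_fin: "ideal_fms C \<Longrightarrow> X \<in> C \<Longrightarrow> fin_mspace X" unfolding ideal_fms_def by blast

lemma inj_of_dist:
  assumes m: "metric_on A d" and h: "\<forall>x\<in>A. \<forall>y\<in>A. e (f x) (f y) = d x y" and z: "\<forall>x\<in>A. e (f x) (f x) = 0"
  shows "inj_on f A"
proof (rule inj_onI)
  fix x y assume xy: "x \<in> A" "y \<in> A" "f x = f y"
  have "d x y = e (f x) (f y)" using h xy(1,2) by simp
  also have "\<dots> = 0" using z xy(1) xy(3)[symmetric] by simp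
  finally have "d x y = 0" .
  then show "x = y" using m xy unfolding metric_on_def by blast
qed

lemma isometry_aff:
  assumes "isometry f A d S dR" "e = 1 \<or> e = -1"
  shows "isometry (\<lambda>x. e * f x + c) A d ((\<lambda>x. e * x + c) ` S) dR"
proof -
  have inj: "inj (\<lambda>x::real. e * x + c)" using assms(2) by (auto simp: inj_on_def)
  have b: "bij_betw f A S" using assms(1) by (auto simp: isometry_def)
  have "bij_betw ((\<lambda>x. e * x + c) \<circ> f) A ((\<lambda>x. e * x + c) ` S)"
    using b inj by (meson bij_betw_comp_iff bij_betw_imageI inj_on_subset subset_UNIV)
  then have "bij_betw (\<lambda>x. e * f x + c) A ((\<lambda>x. e * x + c) ` S)" by (simp add: o_def)
  moreover have "\<forall>x\<in>A. \<forall>y\<in>A. dR (e * f x + c) (e * f y + c) = d x y"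
  proof (intro ballI)
    fix x y assume "x \<in> A" "y \<in> A"
    then have "dR (f x) (f y) = d x y" using assms(1) by (auto simp: isometry_def)
    then show "dR (e * f x + c) (e * f y + c) = d x y" using assms(2) unfolding dR_def
      by (auto simp: abs_minus_commute)
  qed
  ultimately show ?thesis unfolding isometry_def by blast
qed

lemma good_aff:
  assumes "good C W" "e = 1 \<or> e = -1"
  shows "good C ((\<lambda>x. e * x + c) ` W)"
proof -
  obtain X f where X: "X \<in> C" "isometry f (fst X) (snd X) W dR" "finite W" using assms(1) by (auto simp: good_def)
  have "isometry (\<lambda>x. e * f x + c) (fst X) (snd X) ((\<lambda>x. e * x + c) ` W) dR"
    by (rule isometry_aff[OF X(2) assms(2)])
  moreover have "finite ((\<lambda>x. e * x + c) ` W)" using X(3) by simp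
  ultimately show ?thesis unfolding good_def using X(1) by blast
qed

lemma good_subset:
  assumes "ideal_fms C" "good C W" "V \<subseteq> W"
  shows "good C V"
proof -
  obtain X f where X: "X \<in> C" "isometry f (fst X) (snd X) W dR" "finite W" using assms(2) by (auto simp: good_def)
  define A where "A = fst X \<inter> f -` V"
  define Y where "Y = (A, snd X)"
  have fX: "fin_mspace X" using ideal_fin assms(1) X(1) .
  have AX: "A \<subseteq> fst X" unfolding A_def by blast
  have "finite A" using fX AX finite_subset unfolding fin_mspace_def by blast
  moreover have "metric_on A (snd X)" using fX AX metric_on_subset unfolding fin_mspace_def by blast
  ultimately have "fin_mspace Y" unfolding Y_def fin_mspace_def by simp
  moreover have "isom_emb id (fst Y) (snd Y) (fst X) (snd X)" using AX unfolding Y_def isom_emb_def by auto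
  ultimately have YC: "Y \<in> C" using ideal_down assms(1) X(1) by blast
  have bij: "bij_betw f (fst X) W" using X(2) by (simp add: isometry_def)
  have fW: "f ` fst X = W" using bij by (simp add: bij_betw_def)
  have "f ` A = V"
  proof
    show "f ` A \<subseteq> V" unfolding A_def by blast
    show "V \<subseteq> f ` A"
    proof
      fix v assume v: "v \<in> V"
      then have "v \<in> f ` fst X" using fW assms(3) by blast
      then obtain x where "x \<in> fst X" "v = f x" by blast
      then show "v \<in> f ` A" using v unfolding A_def by blast
    qed
  qed
  then have "bij_betw f A V" using bij_betw_subset[OF bij AX] by blast
  moreover have "\<forall>x\<in>A. \<forall>y\<in>A. dR (f x) (f y) = snd X x y" using X(2) AX unfolding isometry_def by blast
  ultimately have "isometry f (fst Y) (snd Y) V dR" unfolding isometry_def Y_def by simp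
  moreover have "finite V" using X(3) assms(3) finite_subset by blast
  ultimately show ?thesis unfolding good_def using YC by blast
qed

lemma emb_aff:
  assumes "isometry f1 (fst X1) (snd X1) W1 dR"
    and "isom_emb k (fst X1) (snd X1) (fst Z) (snd Z)"
    and "isometry fZ (fst Z) (snd Z) S dR"
  shows "\<exists>e c. (e = 1 \<or> e = -1) \<and> (\<forall>x\<in>W1. fZ (k (inv_into (fst X1) f1 x)) = e * x + c) \<and> (\<lambda>x. e * x + c) ` W1 \<subseteq> S"
proof -
  let ?m = "\<lambda>x. fZ (k (inv_into (fst X1) f1 x))"
  have bij1: "bij_betw f1 (fst X1) W1" using assms(1) by (auto simp: isometry_def)
  have inv: "\<forall>x\<in>W1. inv_into (fst X1) f1 x \<in> fst X1 \<and> f1 (inv_into (fst X1) f1 x) = x"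
    using bij1 by (auto simp: bij_betw_def inv_into_into f_inv_into_f)
  have mS: "\<forall>x\<in>W1. ?m x \<in> S"
  proof
    fix x assume "x \<in> W1"
    then have "k (inv_into (fst X1) f1 x) \<in> fst Z" using inv assms(2) unfolding isom_emb_def by auto
    then show "?m x \<in> S" using assms(3) unfolding isometry_def bij_betw_def by auto
  qed
  have "\<forall>x\<in>W1. \<forall>y\<in>W1. \<bar>?m x - ?m y\<bar> = \<bar>x - y\<bar>"
  proof (intro ballI)
    fix x y assume xy: "x \<in> W1" "y \<in> W1"
    define a where "a = inv_into (fst X1) f1 x"
    define b where "b = inv_into (fst X1) f1 y"
    have ab: "a \<in> fst X1" "b \<in> fst X1" "f1 a = x" "f1 b = y" using inv xy a_def b_def by auto
    have kab: "k a \<in> fst Z" "k b \<in> fst Z" using assms(2) ab unfolding isom_emb_def by auto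
    have "dR (?m x) (?m y) = snd Z (k a) (k b)" using assms(3) kab a_def b_def by (auto simp: isometry_def)
    also have "\<dots> = snd X1 a b" using assms(2) ab unfolding isom_emb_def by auto
    also have "\<dots> = dR x y" using assms(1) ab by (auto simp: isometry_def)
    finally show "\<bar>?m x - ?m y\<bar> = \<bar>x - y\<bar>" by (simp add: dR_def)
  qed
  from affine_of_dist[OF this] obtain e c where ec: "e = 1 \<or> e = -1" "\<forall>x\<in>W1. ?m x = e * x + c" by blast
  have "(\<lambda>x. e * x + c) ` W1 \<subseteq> S" using mS ec(2) by auto
  then show ?thesis using ec by blast
qed

lemma good_directed:
  assumes "ideal_fms C" "C \<subseteq> age (UNIV::real set) dR" "good C W1" "good C W2"
  shows "\<exists>W3 e1 c1 e2 c2. good C W3 \<and> (e1 = 1 \<or> e1 = -1) \<and> (e2 = 1 \<or> e2 = -1) \<and>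
     (\<lambda>x. e1 * x + c1) ` W1 \<subseteq> W3 \<and> (\<lambda>x. e2 * x + c2) ` W2 \<subseteq> W3"
proof -
  obtain X1 f1 where X1: "X1 \<in> C" "isometry f1 (fst X1) (snd X1) W1 dR" using assms(3) by (auto simp: good_def)
  obtain X2 f2 where X2: "X2 \<in> C" "isometry f2 (fst X2) (snd X2) W2 dR" using assms(4) by (auto simp: good_def)
  obtain Z where Z: "Z \<in> C" "embeds X1 Z" "embeds X2 Z" using assms(1) X1(1) X2(1) unfolding ideal_fms_def by blast
  obtain k1 where k1: "isom_emb k1 (fst X1) (snd X1) (fst Z) (snd Z)" using Z(2) by (auto simp: embeds_def)
  obtain k2 where k2: "isom_emb k2 (fst X2) (snd X2) (fst Z) (snd Z)" using Z(3) by (auto simp: embeds_def)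
  obtain S fZ where S: "finite S" "isometry fZ (fst Z) (snd Z) S dR" using assms(2) Z(1) unfolding age_def by blast
  have gS: "good C S" using S Z(1) by (auto simp: good_def)
  obtain e1 c1 where 1: "(e1 = 1 \<or> e1 = -1)" "(\<lambda>x. e1 * x + c1) ` W1 \<subseteq> S" using emb_aff[OF X1(2) k1 S(2)] by blast
  obtain e2 c2 where 2: "(e2 = 1 \<or> e2 = -1)" "(\<lambda>x. e2 * x + c2) ` W2 \<subseteq> S" using emb_aff[OF X2(2) k2 S(2)] by blast
  show ?thesis using gS 1 2 by blast
qed



lemma good_refl:
  assumes I: "ideal_fms C" and A: "C \<subseteq> age (UNIV::real set) dR" and am: "amalg2 C"
    and g: "good C W" and pq: "p \<in> W" "q \<in> W" "p \<noteq> q"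
  shows "good C (W \<union> (\<lambda>x. p + q - x) ` W)"
proof -
  obtain X f where X: "X \<in> C" "isometry f (fst X) (snd X) W dR" using g by (auto simp: good_def)
  have bij: "bij_betw f (fst X) W" using X(2) by (simp add: isometry_def)
  define a where "a = inv_into (fst X) f p"
  define b where "b = inv_into (fst X) f q"
  have ab: "a \<in> fst X" "b \<in> fst X" "f a = p" "f b = q"
    using bij pq unfolding a_def b_def by (auto simp: bij_betw_def inv_into_into f_inv_into_f)
  have anb: "a \<noteq> b" using ab pq(3) by auto
  have fX: "fin_mspace X" using I X(1) ideal_fin by blast
  then have mX: "metric_on (fst X) (snd X)" by (simp add: fin_mspace_def)
  define \<sigma> where "\<sigma> = (\<lambda>i::nat. if i = 0 then a else b)"
  define \<tau> where "\<tau> = (\<lambda>i::nat. if i = 0 then b else a)"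
  define A0 where "A0 = ({0, 1::nat}, \<lambda>i j. snd X (\<sigma> i) (\<sigma> j))"
  have inj\<sigma>: "inj_on \<sigma> {0,1}" using anb by (auto simp: \<sigma>_def inj_on_def)
  have "\<sigma> ` {0,1} \<subseteq> fst X" using ab by (auto simp: \<sigma>_def)
  from metric_on_pull[OF mX inj\<sigma> this] have "fin_mspace A0" unfolding A0_def fin_mspace_def by simp
  moreover have emb\<sigma>: "isom_emb \<sigma> (fst A0) (snd A0) (fst X) (snd X)"
    using ab unfolding A0_def isom_emb_def \<sigma>_def by auto
  ultimately have A0C: "A0 \<in> C" using ideal_down[OF I X(1)] by blast
  have sym: "snd X a b = snd X b a" and z: "snd X a a = 0" "snd X b b = 0"
    using mX ab unfolding metric_on_def by auto
  have emb\<tau>: "isom_emb \<tau> (fst A0) (snd A0) (fst X) (snd X)"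
    using ab sym z unfolding A0_def isom_emb_def \<sigma>_def \<tau>_def by auto
  have c2: "card (fst A0) \<le> 2" unfolding A0_def by simp
  have "\<exists>B\<in>C. \<exists>g1 g2. isom_emb g1 (fst X) (snd X) (fst B) (snd B) \<and>
          isom_emb g2 (fst X) (snd X) (fst B) (snd B) \<and> (\<forall>x\<in>fst A0. g1 (\<sigma> x) = g2 (\<tau> x))"
    using am A0C X(1) emb\<sigma> emb\<tau> c2 unfolding amalg2_def by blast
  then obtain B g1 g2 where B: "B \<in> C" "isom_emb g1 (fst X) (snd X) (fst B) (snd B)"
     "isom_emb g2 (fst X) (snd X) (fst B) (snd B)" "\<forall>x\<in>fst A0. g1 (\<sigma> x) = g2 (\<tau> x)"
    by blast
  have g12: "g1 a = g2 b" "g1 b = g2 a" using B(4) unfolding A0_def \<sigma>_def \<tau>_def by auto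
  obtain S fB where S: "finite S" "isometry fB (fst B) (snd B) S dR" using A B(1) unfolding age_def by blast
  have gS: "good C S" using S B(1) by (auto simp: good_def)
  obtain e1 c1 where h1: "e1 = 1 \<or> e1 = -1" "\<forall>x\<in>W. fB (g1 (inv_into (fst X) f x)) = e1 * x + c1"
      "(\<lambda>x. e1 * x + c1) ` W \<subseteq> S"
    using emb_aff[OF X(2) B(2) S(2)] by blast
  obtain e2 c2 where h2: "e2 = 1 \<or> e2 = -1" "\<forall>x\<in>W. fB (g2 (inv_into (fst X) f x)) = e2 * x + c2"
      "(\<lambda>x. e2 * x + c2) ` W \<subseteq> S"
    using emb_aff[OF X(2) B(3) S(2)] by blast
  have "fB (g1 a) = e1 * p + c1" using h1(2) pq(1) a_def by auto
  moreover have "fB (g2 b) = e2 * q + c2" using h2(2) pq(2) b_def by auto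
  ultimately have E1: "e1 * p + c1 = e2 * q + c2" using g12 by simp
  have "fB (g1 b) = e1 * q + c1" using h1(2) pq(2) b_def by auto
  moreover have "fB (g2 a) = e2 * p + c2" using h2(2) pq(1) a_def by auto
  ultimately have E2: "e1 * q + c1 = e2 * p + c2" using g12 by simp
  have e2: "e2 = - e1" using h1(1) h2(1) E1 E2 pq(3) by auto
  have cc: "e1 * (c2 - c1) = p + q" using h1(1) E1 e2 by auto
  define \<psi> where "\<psi> = (\<lambda>x. e1 * x + (- e1 * c1))"
  have g\<psi>: "good C (\<psi> ` S)" unfolding \<psi>_def by (rule good_aff[OF gS h1(1)])
  have "W \<union> (\<lambda>x. p + q - x) ` W \<subseteq> \<psi> ` S"
  proof
    fix y assume "y \<in> W \<union> (\<lambda>x. p + q - x) ` W"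
    then consider "y \<in> W" | w where "w \<in> W" "y = p + q - w" by auto
    then show "y \<in> \<psi> ` S"
    proof cases
      case 1
      have "e1 * y + c1 \<in> S" using h1(3) 1 by auto
      moreover have "y = \<psi> (e1 * y + c1)" using h1(1) unfolding \<psi>_def by auto
      ultimately show ?thesis by (rule rev_image_eqI)
    next
      case 2
      have "e2 * w + c2 \<in> S" using h2(3) 2 by auto
      moreover have "y = \<psi> (e2 * w + c2)" using h1(1) 2 e2 cc unfolding \<psi>_def
        by (auto simp: algebra_simps)
      ultimately show ?thesis by (rule rev_image_eqI)
    qed
  qed
  then show ?thesis using good_subset[OF I g\<psi>] by blast
qed

lemma good_shift_diff:
  assumes I: "ideal_fms C" and A: "C \<subseteq> age (UNIV::real set) dR" and am: "amalg2 C"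
    and g: "good C W" and c3: "3 \<le> card W" and pq: "p \<in> W" "q \<in> W"
  shows "good C (W \<union> (\<lambda>x. x + (q - p)) ` W)"
proof (cases "p = q")
  case True then show ?thesis using g by simp
next
  case False
  have fin: "finite W" using g by (simp add: good_def)
  have "\<not> W \<subseteq> {p, q}"
  proof
    assume "W \<subseteq> {p, q}"
    then have "card W \<le> card {p, q}" by (rule card_mono[rotated]) simp
    also have "\<dots> \<le> 2" by (simp add: card_insert_if)
    finally show False using c3 by simp
  qed
  then obtain r where r: "r \<in> W" "r \<noteq> p" "r \<noteq> q" by blast
  define W1 where "W1 = W \<union> (\<lambda>x. p + r - x) ` W"
  have g1: "good C W1" unfolding W1_def using good_refl[OF I A am g pq(1) r(1)] r(2) by auto
  have qr: "q \<in> W1" "r \<in> W1" using pq r unfolding W1_def by auto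
  define W2 where "W2 = W1 \<union> (\<lambda>x. q + r - x) ` W1"
  have g2: "good C W2" unfolding W2_def using good_refl[OF I A am g1 qr] r(3) by auto
  have "W \<union> (\<lambda>x. x + (q - p)) ` W \<subseteq> W2"
  proof
    fix y assume "y \<in> W \<union> (\<lambda>x. x + (q - p)) ` W"
    then consider "y \<in> W" | w where "w \<in> W" "y = w + (q - p)" by auto
    then show "y \<in> W2"
    proof cases
      case 1 then show ?thesis unfolding W2_def W1_def by auto
    next
      case 2
      have "p + r - w \<in> W1" using 2 unfolding W1_def by auto
      then have "q + r - (p + r - w) \<in> (\<lambda>x. q + r - x) ` W1" by (rule imageI)
      moreover have "y = q + r - (p + r - w)" using 2 by simp
      ultimately show ?thesis unfolding W2_def by blast
    qed
  qed
  then show ?thesis using good_subset[OF I g2] by blast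
qed

definition Gs :: "fms set \<Rightarrow> real set" where
  "Gs C = {t. \<exists>W. good C W \<and> (\<exists>p\<in>W. p + t \<in> W)}"

lemma card_aff_le:
  assumes "good C W3" "(\<lambda>x. e * x + c) ` W \<subseteq> W3" "e = 1 \<or> e = -1"
  shows "card W \<le> card W3"
proof -
  have fin: "finite W3" using assms(1) by (simp add: good_def)
  have "inj_on (\<lambda>x. e * x + c) W" using assms(3) by (auto simp: inj_on_def)
  then have "card ((\<lambda>x. e * x + c) ` W) = card W" by (rule card_image)
  then show ?thesis using card_mono[OF fin assms(2)] by linarith
qed

lemma good_shift_G:
  assumes I: "ideal_fms C" and A: "C \<subseteq> age (UNIV::real set) dR" and am: "amalg2 C"
    and g: "good C W" and c3: "3 \<le> card W" and t: "t \<in> Gs C"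
  shows "good C (W \<union> (\<lambda>x. x + t) ` W)"
proof -
  obtain W2 p where W2: "good C W2" "p \<in> W2" "p + t \<in> W2" using t by (auto simp: Gs_def)
  obtain W3 e1 c1 e2 c2 where W3: "good C W3" "e1 = 1 \<or> e1 = -1" "e2 = 1 \<or> e2 = -1"
     "(\<lambda>x. e1 * x + c1) ` W \<subseteq> W3" "(\<lambda>x. e2 * x + c2) ` W2 \<subseteq> W3"
    using good_directed[OF I A g W2(1)] by blast
  have c3': "3 \<le> card W3" using card_aff_le[OF W3(1) W3(4) W3(2)] c3 by linarith
  define a where "a = e2 * p + c2"
  define b where "b = e2 * (p + t) + c2"
  have abW: "a \<in> W3" "b \<in> W3" using W3(5) W2 unfolding a_def b_def by auto
  obtain p' q' where pq': "p' \<in> W3" "q' \<in> W3" "q' - p' = e1 * t"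
  proof (cases "e1 = e2")
    case True then show ?thesis using that[of a b] abW a_def b_def by (simp add: algebra_simps)
  next
    case False then have "e2 = - e1" using W3(2,3) by auto
    then show ?thesis using that[of b a] abW a_def b_def by (simp add: algebra_simps)
  qed
  define W4 where "W4 = W3 \<union> (\<lambda>x. x + (q' - p')) ` W3"
  have gW4: "good C W4" using good_shift_diff[OF I A am W3(1) c3' pq'(1,2)] W4_def by simp
  have gW5: "good C ((\<lambda>x. e1 * x + (- e1 * c1)) ` W4)" using good_aff[OF gW4 W3(2)] .
  have sub: "W \<union> (\<lambda>x. x + t) ` W \<subseteq> (\<lambda>x. e1 * x + (- e1 * c1)) ` W4"
  proof
    fix y assume "y \<in> W \<union> (\<lambda>x. x + t) ` W"
    then consider "y \<in> W" | w where "w \<in> W" "y = w + t" by auto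
    then show "y \<in> (\<lambda>x. e1 * x + (- e1 * c1)) ` W4"
    proof cases
      case 1
      have "e1 * y + c1 \<in> W4" using W3(4) 1 W4_def by auto
      moreover have "y = e1 * (e1 * y + c1) + (- e1 * c1)" using W3(2) by auto
      ultimately show ?thesis by (rule rev_image_eqI)
    next
      case 2
      have "e1 * w + c1 + (q' - p') \<in> W4" using W3(4) 2 W4_def by auto
      moreover have "y = e1 * (e1 * w + c1 + (q' - p')) + (- e1 * c1)" using W3(2) 2 pq'(3)
        by (auto simp: algebra_simps)
      ultimately show ?thesis by (rule rev_image_eqI)
    qed
  qed
  show ?thesis using good_subset[OF I gW5 sub] .
qed

lemma Gs_neg: "t \<in> Gs C \<Longrightarrow> -t \<in> Gs C"
proof -
  assume "t \<in> Gs C"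
  then obtain W p where "good C W" "p \<in> W" "p + t \<in> W" by (auto simp: Gs_def)
  then show "-t \<in> Gs C" unfolding Gs_def by (intro CollectI exI[of _ W] conjI bexI[of _ "p + t"]) auto
qed

lemma Gs_zero: "good C W \<Longrightarrow> p \<in> W \<Longrightarrow> 0 \<in> Gs C"
  unfolding Gs_def by auto

lemma Gs_add:
  assumes I: "ideal_fms C" and A: "C \<subseteq> age (UNIV::real set) dR" and am: "amalg2 C"
    and W0: "good C W0" "3 \<le> card W0" and t1: "t1 \<in> Gs C" and t2: "t2 \<in> Gs C"
  shows "t1 + t2 \<in> Gs C"
proof -
  obtain W1 p where W1: "good C W1" "p \<in> W1" "p + t1 \<in> W1" using t1 by (auto simp: Gs_def)
  obtain W3 e c e0 c0 where W3: "good C W3" "e = 1 \<or> e = -1" "e0 = 1 \<or> e0 = -1"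
     "(\<lambda>x. e * x + c) ` W1 \<subseteq> W3" "(\<lambda>x. e0 * x + c0) ` W0 \<subseteq> W3"
    using good_directed[OF I A W1(1) W0(1)] by blast
  have c3': "3 \<le> card W3" using card_aff_le[OF W3(1) W3(5) W3(3)] W0(2) by linarith
  have et2: "e * t2 \<in> Gs C" using W3(2) t2 Gs_neg by auto
  define W4 where "W4 = W3 \<union> (\<lambda>x. x + e * t2) ` W3"
  have g4: "good C W4" unfolding W4_def by (rule good_shift_G[OF I A am W3(1) c3' et2])
  define u where "u = e * p + c"
  define v where "v = e * (p + t1) + c"
  have uv: "u \<in> W3" "v \<in> W3" using W3(4) W1 unfolding u_def v_def by auto
  have u4: "u \<in> W4" using uv W4_def by auto
  have v4: "v + e * t2 \<in> W4" using uv W4_def by auto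
  have vu: "v + e * t2 = u + e * (t1 + t2)" unfolding u_def v_def by (simp add: algebra_simps)
  from W3(2) show ?thesis
  proof
    assume "e = 1"
    then have "u + (t1 + t2) \<in> W4" using v4 vu by (simp add: add.assoc)
    then show ?thesis using g4 u4 unfolding Gs_def by blast
  next
    assume "e = -1"
    then have "(v + e * t2) + (t1 + t2) = u" using vu by simp
    then show ?thesis using g4 u4 v4 unfolding Gs_def by (intro CollectI exI[of _ W4] conjI bexI[of _ "v + e * t2"]) auto
  qed
qed

lemma fin_G_good:
  assumes I: "ideal_fms C" and A: "C \<subseteq> age (UNIV::real set) dR" and am: "amalg2 C"
    and W0: "good C W0" "3 \<le> card W0" and S: "finite S" "S \<subseteq> Gs C"
  shows "good C S"
proof -
  have "\<exists>W w0. good C W \<and> 3 \<le> card W \<and> w0 \<in> W \<and> (\<lambda>x. w0 + x) ` S \<subseteq> W"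
    using S
  proof (induction S rule: finite_induct)
    case empty
    have "W0 \<noteq> {}" using W0(2) by auto
    then obtain w0 where "w0 \<in> W0" by auto
    then show ?case using W0 by auto
  next
    case (insert t S)
    then obtain W w0 where W: "good C W" "3 \<le> card W" "w0 \<in> W" "(\<lambda>x. w0 + x) ` S \<subseteq> W" by auto
    have t: "t \<in> Gs C" using insert.prems by auto
    define W' where "W' = W \<union> (\<lambda>x. x + t) ` W"
    have g': "good C W'" unfolding W'_def by (rule good_shift_G[OF I A am W(1,2) t])
    have "finite W'" using g' by (simp add: good_def)
    then have "card W \<le> card W'" by (rule card_mono) (auto simp: W'_def)
    moreover have "w0 + t \<in> W'" using W(3) unfolding W'_def by (auto simp: add.commute)
    ultimately show ?case using g' W W'_def by (intro exI[of _ W'] exI[of _ w0]) auto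
  qed
  then obtain W w0 where W: "good C W" "w0 \<in> W" "(\<lambda>x. w0 + x) ` S \<subseteq> W" by blast
  have "S \<subseteq> (\<lambda>x. 1 * x + (- w0)) ` W"
  proof
    fix s assume "s \<in> S"
    then have "w0 + s \<in> W" using W(3) by auto
    moreover have "s = 1 * (w0 + s) + (- w0)" by simp
    ultimately show "s \<in> (\<lambda>x. 1 * x + (- w0)) ` W" by (rule rev_image_eqI)
  qed
  moreover have "good C ((\<lambda>x. 1 * x + (- w0)) ` W)" by (rule good_aff[OF W(1)]) simp
  ultimately show ?thesis using good_subset[OF I] by blast
qed



lemma subgroup_homog:
  assumes G: "additive_subgroup G"
  shows "homogeneous G dR"
  unfolding homogeneous_def
proof (intro conjI allI impI)
  show "metric_on G dR" unfolding metric_on_def dR_def by auto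
  fix S T h assume H: "S \<subseteq> G \<and> T \<subseteq> G \<and> finite S \<and> finite T \<and> isometry h S dR T dR"
  have "\<forall>x\<in>S. \<forall>y\<in>S. \<bar>h x - h y\<bar> = \<bar>x - y\<bar>" using H unfolding isometry_def dR_def by auto
  then obtain e c where ec: "e = 1 \<or> e = -1" "\<forall>x\<in>S. h x = e * x + c" using affine_of_dist by blast
  have add: "\<And>x y. x \<in> G \<Longrightarrow> y \<in> G \<Longrightarrow> x + y \<in> G" and neg: "\<And>x. x \<in> G \<Longrightarrow> - x \<in> G"
    using G unfolding additive_subgroup_def by auto
  have mul: "\<And>x. x \<in> G \<Longrightarrow> e * x \<in> G" using ec(1) neg by auto
  show "\<exists>g. isometry g G dR G dR \<and> (\<forall>x\<in>S. g x = h x)"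
  proof (cases "S = {}")
    case True
    have "isometry id G dR G dR" unfolding isometry_def by auto
    then show ?thesis using True by blast
  next
    case False
    then obtain s where s: "s \<in> S" by auto
    have "h s \<in> T" using H s unfolding isometry_def bij_betw_def by auto
    then have hs: "h s \<in> G" using H by auto
    have "c = h s + - (e * s)" using ec(2) s by auto
    moreover have "s \<in> G" using s H by auto
    then have "- (e * s) \<in> G" using mul neg by blast
    then have "h s + - (e * s) \<in> G" using hs add by blast
    ultimately have cG: "c \<in> G" by simp
    let ?g = "\<lambda>x. e * x + c"
    have "inj_on ?g G" using ec(1) by (auto simp: inj_on_def)
    moreover have "?g ` G = G"
    proof
      show "?g ` G \<subseteq> G" using mul add cG by auto
      show "G \<subseteq> ?g ` G"
      proof
        fix y assume y: "y \<in> G"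
        have "- c \<in> G" using cG neg by blast
        then have "y + - c \<in> G" using y add by blast
        then have "e * (y + - c) \<in> G" using mul by blast
        moreover have "y = ?g (e * (y + - c))" using ec(1) by (auto simp: algebra_simps)
        ultimately show "y \<in> ?g ` G" by (rule rev_image_eqI)
      qed
    qed
    moreover have "\<forall>x\<in>G. \<forall>y\<in>G. dR (?g x) (?g y) = dR x y"
      using ec(1) unfolding dR_def by (auto simp: abs_minus_commute)
    ultimately have "isometry ?g G dR G dR" unfolding isometry_def bij_betw_def by blast
    then show ?thesis using ec(2) by auto
  qed
qed

lemma emb_via_R:
  assumes f: "isometry f (fst X) (snd X) S dR" and f': "isometry f' (fst X') (snd X') S' dR" and sub: "S \<subseteq> S'"
  shows "isom_emb (\<lambda>x. inv_into (fst X') f' (f x)) (fst X) (snd X) (fst X') (snd X')"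
proof -
  have b: "bij_betw f (fst X) S" and b': "bij_betw f' (fst X') S'" using f f' by (auto simp: isometry_def)
  have fx: "\<And>x. x \<in> fst X \<Longrightarrow> f x \<in> f' ` fst X'" using b b' sub unfolding bij_betw_def by auto
  have 1: "\<And>x. x \<in> fst X \<Longrightarrow> inv_into (fst X') f' (f x) \<in> fst X' \<and> f' (inv_into (fst X') f' (f x)) = f x"
    using fx by (auto simp: inv_into_into f_inv_into_f)
  show ?thesis unfolding isom_emb_def
  proof (intro conjI ballI)
    show "(\<lambda>x. inv_into (fst X') f' (f x)) ` fst X \<subseteq> fst X'" using 1 by auto
    fix x y assume xy: "x \<in> fst X" "y \<in> fst X"
    have i1: "inv_into (fst X') f' (f x) \<in> fst X'" "inv_into (fst X') f' (f y) \<in> fst X'"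
      using 1 xy by auto
    have "snd X' (inv_into (fst X') f' (f x)) (inv_into (fst X') f' (f y))
        = dR (f' (inv_into (fst X') f' (f x))) (f' (inv_into (fst X') f' (f y)))"
      using f' i1 unfolding isometry_def by simp
    also have "\<dots> = dR (f x) (f y)" using 1 xy by simp
    also have "\<dots> = snd X x y" using f xy unfolding isometry_def by auto
    finally show "snd X' (inv_into (fst X') f' (f x)) (inv_into (fst X') f' (f y)) = snd X x y" .
  qed
qed

lemma part3:
  assumes I: "ideal_fms C" and A: "C \<subseteq> age (UNIV::real set) dR" and am: "amalg2 C"
    and ex3: "\<exists>X\<in>C. card (fst X) = 3"
  shows "\<exists>G. additive_subgroup G \<and> homogeneous G dR \<and> age G dR = C"
proof -
  obtain X where X: "X \<in> C" "card (fst X) = 3" using ex3 by blast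
  obtain W0 f where W0f: "finite W0" "isometry f (fst X) (snd X) W0 dR" using A X(1) unfolding age_def by blast
  have gW0: "good C W0" using W0f X(1) by (auto simp: good_def)
  have "card W0 = card (fst X)" using W0f(2) bij_betw_same_card unfolding isometry_def by metis
  then have c3: "3 \<le> card W0" using X(2) by simp
  then obtain w where w: "w \<in> W0" by fastforce
  have sg: "additive_subgroup (Gs C)" unfolding additive_subgroup_def
    using Gs_zero[OF gW0 w] Gs_neg Gs_add[OF I A am gW0 c3] by blast
  have ageG: "age (Gs C) dR = C"
  proof
    show "age (Gs C) dR \<subseteq> C"
    proof
      fix Y assume "Y \<in> age (Gs C) dR"
      then obtain S g where Y: "fin_mspace Y" "S \<subseteq> Gs C" "finite S" "isometry g (fst Y) (snd Y) S dR"
        unfolding age_def by blast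
      have "good C S" by (rule fin_G_good[OF I A am gW0 c3 Y(3) Y(2)])
      then obtain X' f' where X': "X' \<in> C" "isometry f' (fst X') (snd X') S dR" by (auto simp: good_def)
      have "isom_emb (\<lambda>x. inv_into (fst X') f' (g x)) (fst Y) (snd Y) (fst X') (snd X')"
        by (rule emb_via_R[OF Y(4) X'(2)]) simp
      then show "Y \<in> C" using ideal_down[OF I X'(1) Y(1)] by blast
    qed
    show "C \<subseteq> age (Gs C) dR"
    proof
      fix Y assume YC: "Y \<in> C"
      then obtain S g where S: "finite S" "isometry g (fst Y) (snd Y) S dR" using A unfolding age_def by blast
      have fY: "fin_mspace Y" using I YC ideal_fin by blast
      have gS: "good C S" using S YC by (auto simp: good_def)
      show "Y \<in> age (Gs C) dR"
      proof (cases "S = {}")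
        case True
        then show ?thesis using S fY unfolding age_def by blast
      next
        case False
        then obtain s0 where s0: "s0 \<in> S" by auto
        have iso: "isometry (\<lambda>x. 1 * g x + (- s0)) (fst Y) (snd Y) ((\<lambda>x. 1 * x + (- s0)) ` S) dR"
          by (rule isometry_aff[OF S(2)]) simp
        have "(\<lambda>x. 1 * x + (- s0)) ` S \<subseteq> Gs C"
        proof
          fix y assume "y \<in> (\<lambda>x. 1 * x + (- s0)) ` S"
          then obtain x where x: "x \<in> S" "y = x - s0" by auto
          then have "s0 + y \<in> S" by simp
          then show "y \<in> Gs C" using gS s0 unfolding Gs_def by blast
        qed
        moreover have "finite ((\<lambda>x. 1 * x + (- s0)) ` S)" using S(1) by simp
        ultimately show ?thesis using iso fY unfolding age_def by blast
      qed
    qed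
  qed
  show ?thesis using sg subgroup_homog[OF sg] ageG by blast
qed

lemma small_homog:
  assumes fin: "finite D" and c: "card D \<le> 2"
  shows "homogeneous D dR"
  unfolding homogeneous_def
proof (intro conjI allI impI)
  show "metric_on D dR" unfolding metric_on_def dR_def by auto
  fix S T h assume H: "S \<subseteq> D \<and> T \<subseteq> D \<and> finite S \<and> finite T \<and> isometry h S dR T dR"
  show "\<exists>g. isometry g D dR D dR \<and> (\<forall>x\<in>S. g x = h x)"
  proof (cases "\<forall>x\<in>S. h x = x")
    case True
    have "isometry id D dR D dR" by (simp add: isometry_def)
    then show ?thesis using True by (intro exI[of _ id]) auto
  next
    case False
    then obtain x0 where x0: "x0 \<in> S" "h x0 \<noteq> x0" by auto
    have hS: "\<And>x. x \<in> S \<Longrightarrow> h x \<in> D" using H unfolding isometry_def bij_betw_def by auto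
    have hd: "\<And>x y. x \<in> S \<Longrightarrow> y \<in> S \<Longrightarrow> \<bar>h x - h y\<bar> = \<bar>x - y\<bar>" using H unfolding isometry_def dR_def by auto
    have sub: "{x0, h x0} \<subseteq> D" using x0 hS H by auto
    have "card {x0, h x0} = 2" using x0(2) by simp
    then have D2: "D = {x0, h x0}" using card_subset_eq[OF fin sub] c card_mono[OF fin sub] by simp
    define g where "g = (\<lambda>y. x0 + h x0 - y)"
    have "g ` D = D" unfolding D2 g_def by auto
    moreover have "inj_on g D" unfolding g_def by (auto simp: inj_on_def)
    moreover have "\<forall>x\<in>D. \<forall>y\<in>D. dR (g x) (g y) = dR x y" unfolding g_def dR_def by (auto simp: abs_minus_commute)
    ultimately have "isometry g D dR D dR" unfolding isometry_def bij_betw_def by blast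
    moreover have "\<forall>y\<in>S. g y = h y"
    proof
      fix y assume y: "y \<in> S"
      then have "y = x0 \<or> y = h x0" using H D2 by auto
      then show "g y = h y"
      proof
        assume "y = x0" then show ?thesis unfolding g_def by simp
      next
        assume yh: "y = h x0"
        have "\<bar>h y - h x0\<bar> = \<bar>y - x0\<bar>" using hd y x0(1) by blast
        then have "h y \<noteq> h x0" using yh x0(2) by auto
        moreover have "h y \<in> D" using hS y by blast
        ultimately have "h y = x0" using D2 by auto
        then show ?thesis unfolding g_def using yh by simp
      qed
    qed
    ultimately show ?thesis by blast
  qed
qed



lemma small_case:
  assumes I: "ideal_fms C" and A: "C \<subseteq> age (UNIV::real set) dR" and no3: "\<not> (\<exists>X\<in>C. card (fst X) = 3)"
  shows "\<exists>(D::real set) e. homogeneous D e \<and> age D e = C"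
proof -
  have le2: "\<forall>X\<in>C. card (fst X) \<le> 2"
  proof (rule ccontr)
    assume "\<not> (\<forall>X\<in>C. card (fst X) \<le> 2)"
    then obtain X where X0: "X \<in> C" "\<not> card (fst X) \<le> 2" by blast
    then have X: "X \<in> C" "3 \<le> card (fst X)" by simp_all
    have fX: "fin_mspace X" using I X(1) ideal_fin by blast
    obtain N where N: "N \<subseteq> fst X" "card N = 3" using obtain_subset_with_card_n[OF X(2)] by blast
    have "finite N" using fX N(1) finite_subset unfolding fin_mspace_def by blast
    moreover have "metric_on N (snd X)" using fX N(1) metric_on_subset unfolding fin_mspace_def by blast
    ultimately have "fin_mspace (N, snd X)" unfolding fin_mspace_def by simp
    moreover have "isom_emb id (fst (N, snd X)) (snd (N, snd X)) (fst X) (snd X)"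
      using N(1) unfolding isom_emb_def by auto
    ultimately have "(N, snd X) \<in> C" using ideal_down[OF I X(1)] by blast
    moreover have "card (fst (N, snd X)) = 3" using N(2) by simp
    ultimately show False using no3 by blast
  qed
  have ne: "C \<noteq> {}" using I unfolding ideal_fms_def by blast
  define K where "K = (\<lambda>X. card (fst X)) ` C"
  have "K \<subseteq> {..2}" unfolding K_def using le2 by auto
  then have Kfin: "finite K" using finite_subset by blast
  have Kne: "K \<noteq> {}" using ne K_def by auto
  have "Max K \<in> K" using Kfin Kne by (rule Max_in)
  then obtain Xm where Xm1: "Xm \<in> C" "card (fst Xm) = Max K" unfolding K_def by auto
  have Xm2: "\<forall>Y\<in>C. card (fst Y) \<le> card (fst Xm)"
  proof
    fix Y assume "Y \<in> C"
    then have "card (fst Y) \<in> K" unfolding K_def by blast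
    then show "card (fst Y) \<le> card (fst Xm)" using Max_ge[OF Kfin] Xm1(2) by simp
  qed
  have fXm: "fin_mspace Xm" using I Xm1(1) ideal_fin by blast
  have embm: "\<forall>Y\<in>C. \<exists>k. isom_emb k (fst Y) (snd Y) (fst Xm) (snd Xm)"
  proof
    fix Y assume Y: "Y \<in> C"
    obtain Z where Z: "Z \<in> C" "embeds Xm Z" "embeds Y Z" using I Xm1(1) Y unfolding ideal_fms_def by blast
    obtain k1 where k1: "isom_emb k1 (fst Xm) (snd Xm) (fst Z) (snd Z)" using Z(2) by (auto simp: embeds_def)
    obtain k2 where k2: "isom_emb k2 (fst Y) (snd Y) (fst Z) (snd Z)" using Z(3) by (auto simp: embeds_def)
    have fZ: "fin_mspace Z" using I Z(1) ideal_fin by blast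
    have mXm: "metric_on (fst Xm) (snd Xm)" using fXm by (simp add: fin_mspace_def)
    have mZ: "metric_on (fst Z) (snd Z)" using fZ by (simp add: fin_mspace_def)
    have k1Z: "k1 ` fst Xm \<subseteq> fst Z" using k1 unfolding isom_emb_def by blast
    have zz: "\<forall>x\<in>fst Xm. snd Z (k1 x) (k1 x) = 0" using k1Z mZ unfolding metric_on_def by auto
    have k1d: "\<forall>x\<in>fst Xm. \<forall>y\<in>fst Xm. snd Z (k1 x) (k1 y) = snd Xm x y" using k1 unfolding isom_emb_def by blast
    have "inj_on k1 (fst Xm)" using inj_of_dist[of "fst Xm" "snd Xm" "snd Z" k1] mXm k1d zz by blast
    then have c1: "card (k1 ` fst Xm) = card (fst Xm)" by (rule card_image)
    have finZ: "finite (fst Z)" using fZ by (simp add: fin_mspace_def)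
    have "card (fst Z) \<le> card (fst Xm)" using Xm2 Z(1) by blast
    then have imZ: "k1 ` fst Xm = fst Z" using card_subset_eq[OF finZ k1Z] c1 card_mono[OF finZ k1Z] by simp
    define k where "k = (\<lambda>y. inv_into (fst Xm) k1 (k2 y))"
    have kk: "\<And>y. y \<in> fst Y \<Longrightarrow> k y \<in> fst Xm \<and> k1 (k y) = k2 y"
    proof -
      fix y assume "y \<in> fst Y"
      then have "k2 y \<in> k1 ` fst Xm" using k2 imZ unfolding isom_emb_def by blast
      then show "k y \<in> fst Xm \<and> k1 (k y) = k2 y" unfolding k_def by (simp add: inv_into_into f_inv_into_f)
    qed
    have "isom_emb k (fst Y) (snd Y) (fst Xm) (snd Xm)" unfolding isom_emb_def
    proof (intro conjI ballI)
      show "k ` fst Y \<subseteq> fst Xm" using kk by auto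
      fix x y assume xy: "x \<in> fst Y" "y \<in> fst Y"
      have "k x \<in> fst Xm" "k y \<in> fst Xm" using kk xy by auto
      then have "snd Xm (k x) (k y) = snd Z (k1 (k x)) (k1 (k y))" using k1d by simp
      also have "\<dots> = snd Z (k2 x) (k2 y)" using kk xy by simp
      also have "\<dots> = snd Y x y" using k2 xy unfolding isom_emb_def by simp
      finally show "snd Xm (k x) (k y) = snd Y x y" .
    qed
    then show "\<exists>k. isom_emb k (fst Y) (snd Y) (fst Xm) (snd Xm)" by blast
  qed
  obtain Sm fm where Sm: "finite Sm" "isometry fm (fst Xm) (snd Xm) Sm dR" using A Xm1(1) unfolding age_def by blast
  have "card Sm = card (fst Xm)" using Sm(2) bij_betw_same_card unfolding isometry_def by metis
  then have cSm: "card Sm \<le> 2" using le2 Xm1(1) by simp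
  have hom: "homogeneous Sm dR" by (rule small_homog[OF Sm(1) cSm])
  have "age Sm dR = C"
  proof
    show "age Sm dR \<subseteq> C"
    proof
      fix Y assume "Y \<in> age Sm dR"
      then obtain S g where Y: "fin_mspace Y" "S \<subseteq> Sm" "finite S" "isometry g (fst Y) (snd Y) S dR"
        unfolding age_def by blast
      have "isom_emb (\<lambda>x. inv_into (fst Xm) fm (g x)) (fst Y) (snd Y) (fst Xm) (snd Xm)"
        by (rule emb_via_R[OF Y(4) Sm(2) Y(2)])
      then show "Y \<in> C" using ideal_down[OF I Xm1(1) Y(1)] by blast
    qed
    show "C \<subseteq> age Sm dR"
    proof
      fix Y assume YC: "Y \<in> C"
      obtain k where k: "isom_emb k (fst Y) (snd Y) (fst Xm) (snd Xm)" using embm YC by blast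
      have fY: "fin_mspace Y" using I YC ideal_fin by blast
      have mY: "metric_on (fst Y) (snd Y)" using fY by (simp add: fin_mspace_def)
      have kin: "\<And>y. y \<in> fst Y \<Longrightarrow> k y \<in> fst Xm" using k unfolding isom_emb_def by blast
      have fmin: "\<And>x. x \<in> fst Xm \<Longrightarrow> fm x \<in> Sm" using Sm(2) unfolding isometry_def bij_betw_def by blast
      have dist: "\<forall>x\<in>fst Y. \<forall>y\<in>fst Y. dR (fm (k x)) (fm (k y)) = snd Y x y"
      proof (intro ballI)
        fix x y assume xy: "x \<in> fst Y" "y \<in> fst Y"
        have "dR (fm (k x)) (fm (k y)) = snd Xm (k x) (k y)" using Sm(2) kin xy unfolding isometry_def by simp
        also have "\<dots> = snd Y x y" using k xy unfolding isom_emb_def by simp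
        finally show "dR (fm (k x)) (fm (k y)) = snd Y x y" .
      qed
      have "inj_on (\<lambda>y. fm (k y)) (fst Y)"
        using inj_of_dist[of "fst Y" "snd Y" dR "\<lambda>y. fm (k y)"] mY dist by (simp add: dR_def)
      then have "bij_betw (\<lambda>y. fm (k y)) (fst Y) ((\<lambda>y. fm (k y)) ` fst Y)" by (simp add: bij_betw_def)
      then have iso: "isometry (\<lambda>y. fm (k y)) (fst Y) (snd Y) ((\<lambda>y. fm (k y)) ` fst Y) dR"
        using dist unfolding isometry_def by blast
      have "(\<lambda>y. fm (k y)) ` fst Y \<subseteq> Sm" using kin fmin by blast
      moreover have "finite ((\<lambda>y. fm (k y)) ` fst Y)" using fY by (simp add: fin_mspace_def)
      ultimately show "Y \<in> age Sm dR" using iso fY unfolding age_def by blast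
    qed
  qed
  then show ?thesis using hom by blast
qed

lemma part1:
  fixes D :: "'a set" and e :: "'a \<Rightarrow> 'a \<Rightarrow> real"
  assumes H: "homogeneous D e" and Ag: "age D e = C"
  shows "amalg2 C"
  unfolding amalg2_def
proof (intro ballI allI impI)
  fix A A1 A2 f1 f2
  assume AC: "A \<in> C" "A1 \<in> C" "A2 \<in> C"
   and F: "card (fst A) \<le> 2 \<and> isom_emb f1 (fst A) (snd A) (fst A1) (snd A1) \<and> isom_emb f2 (fst A) (snd A) (fst A2) (snd A2)"
  have F1: "isom_emb f1 (fst A) (snd A) (fst A1) (snd A1)" and F2: "isom_emb f2 (fst A) (snd A) (fst A2) (snd A2)"
    using F by auto
  have mD: "metric_on D e" using H by (simp add: homogeneous_def)
  have ext: "\<And>S T h. S \<subseteq> D \<Longrightarrow> T \<subseteq> D \<Longrightarrow> finite S \<Longrightarrow> finite T \<Longrightarrow> isometry h S e T e \<Longrightarrow>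
        \<exists>g. isometry g D e D e \<and> (\<forall>x\<in>S. g x = h x)"
    using H unfolding homogeneous_def by blast
  have zD: "\<And>z. z \<in> D \<Longrightarrow> e z z = 0" using mD unfolding metric_on_def by blast
  obtain S1 \<phi>1 where S1: "S1 \<subseteq> D" "finite S1" "isometry \<phi>1 (fst A1) (snd A1) S1 e" using AC(2) Ag unfolding age_def by blast
  obtain S2 \<phi>2 where S2: "S2 \<subseteq> D" "finite S2" "isometry \<phi>2 (fst A2) (snd A2) S2 e" using AC(3) Ag unfolding age_def by blast
  have fA: "fin_mspace A" using AC(1) Ag unfolding age_def by blast
  have mA: "metric_on (fst A) (snd A)" using fA by (simp add: fin_mspace_def)
  have finA: "finite (fst A)" using fA by (simp add: fin_mspace_def)
  have \<phi>1in: "\<And>x. x \<in> fst A1 \<Longrightarrow> \<phi>1 x \<in> S1" using S1(3) unfolding isometry_def bij_betw_def by blast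
  have \<phi>2in: "\<And>x. x \<in> fst A2 \<Longrightarrow> \<phi>2 x \<in> S2" using S2(3) unfolding isometry_def bij_betw_def by blast
  have \<phi>1d: "\<And>x y. x \<in> fst A1 \<Longrightarrow> y \<in> fst A1 \<Longrightarrow> e (\<phi>1 x) (\<phi>1 y) = snd A1 x y" using S1(3) unfolding isometry_def by blast
  have \<phi>2d: "\<And>x y. x \<in> fst A2 \<Longrightarrow> y \<in> fst A2 \<Longrightarrow> e (\<phi>2 x) (\<phi>2 y) = snd A2 x y" using S2(3) unfolding isometry_def by blast
  have f1in: "\<And>x. x \<in> fst A \<Longrightarrow> f1 x \<in> fst A1" using F1 unfolding isom_emb_def by blast
  have f2in: "\<And>x. x \<in> fst A \<Longrightarrow> f2 x \<in> fst A2" using F2 unfolding isom_emb_def by blast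
  define u where "u = (\<lambda>x. \<phi>2 (f2 x))"
  define v where "v = (\<lambda>x. \<phi>1 (f1 x))"
  have uin: "\<And>x. x \<in> fst A \<Longrightarrow> u x \<in> S2" unfolding u_def using f2in \<phi>2in by blast
  have vin: "\<And>x. x \<in> fst A \<Longrightarrow> v x \<in> S1" unfolding v_def using f1in \<phi>1in by blast
  have ud: "\<forall>x\<in>fst A. \<forall>y\<in>fst A. e (u x) (u y) = snd A x y"
    unfolding u_def using F2 f2in \<phi>2d unfolding isom_emb_def by simp
  have vd: "\<forall>x\<in>fst A. \<forall>y\<in>fst A. e (v x) (v y) = snd A x y"
    unfolding v_def using F1 f1in \<phi>1d unfolding isom_emb_def by simp
  have "\<forall>x\<in>fst A. e (u x) (u x) = 0" using uin zD S2(1) by blast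
  then have injU: "inj_on u (fst A)" using inj_of_dist[of "fst A" "snd A" e u] mA ud by blast
  have "\<forall>x\<in>fst A. e (v x) (v x) = 0" using vin zD S1(1) by blast
  then have injV: "inj_on v (fst A)" using inj_of_dist[of "fst A" "snd A" e v] mA vd by blast
  define h where "h = (\<lambda>z. v (inv_into (fst A) u z))"
  have hu: "\<And>x. x \<in> fst A \<Longrightarrow> h (u x) = v x" unfolding h_def using injU by (simp add: inv_into_f_f)
  have "inj_on h (u ` fst A)"
  proof (rule inj_onI)
    fix a b assume ab: "a \<in> u ` fst A" "b \<in> u ` fst A" "h a = h b"
    then obtain x y where xy: "x \<in> fst A" "y \<in> fst A" "a = u x" "b = u y" by blast
    then have "v x = v y" using ab(3) hu by simp
    then have "x = y" using injV xy inj_on_def by metis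
    then show "a = b" using xy by simp
  qed
  moreover have "h ` (u ` fst A) = v ` fst A" using hu by (auto simp: image_iff)
  ultimately have bh: "bij_betw h (u ` fst A) (v ` fst A)" by (simp add: bij_betw_def)
  have "\<forall>a\<in>u ` fst A. \<forall>b\<in>u ` fst A. e (h a) (h b) = e a b"
    using hu ud vd by auto
  then have hiso: "isometry h (u ` fst A) e (v ` fst A) e" using bh unfolding isometry_def by blast
  have "u ` fst A \<subseteq> D" using uin S2(1) by blast
  moreover have "v ` fst A \<subseteq> D" using vin S1(1) by blast
  ultimately obtain g where g: "isometry g D e D e" "\<forall>z\<in>u ` fst A. g z = h z"
    using ext[OF _ _ _ _ hiso] finA by blast
  have gD: "\<And>z. z \<in> D \<Longrightarrow> g z \<in> D" using g(1) unfolding isometry_def bij_betw_def by blast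
  have gd: "\<And>a b. a \<in> D \<Longrightarrow> b \<in> D \<Longrightarrow> e (g a) (g b) = e a b" using g(1) unfolding isometry_def by blast
  define T' where "T' = S1 \<union> g ` S2"
  have T'D: "T' \<subseteq> D" unfolding T'_def using S1(1) S2(1) gD by blast
  have finT: "finite T'" unfolding T'_def using S1(2) S2(2) by simp
  obtain \<nu> where \<nu>: "bij_betw \<nu> {0..<card T'} T'" using ex_bij_betw_nat_finite[OF finT] by blast
  define B where "B = ({0..<card T'}, \<lambda>i j. e (\<nu> i) (\<nu> j))"
  have "metric_on {0..<card T'} (\<lambda>i j. e (\<nu> i) (\<nu> j))"
    using metric_on_pull[OF metric_on_subset[OF mD T'D]] \<nu> unfolding bij_betw_def by blast
  then have fB: "fin_mspace B" unfolding B_def fin_mspace_def by simp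
  have "isometry \<nu> (fst B) (snd B) T' e" unfolding B_def isometry_def using \<nu> by simp
  then have BC: "B \<in> C" using Ag fB T'D finT unfolding age_def by blast
  have \<nu>inv: "\<And>z. z \<in> T' \<Longrightarrow> inv_into {0..<card T'} \<nu> z \<in> {0..<card T'} \<and> \<nu> (inv_into {0..<card T'} \<nu> z) = z"
  proof -
    fix z assume z: "z \<in> T'"
    have zz: "z \<in> \<nu> ` {0..<card T'}" using \<nu> z by (simp add: bij_betw_def)
    show "inv_into {0..<card T'} \<nu> z \<in> {0..<card T'} \<and> \<nu> (inv_into {0..<card T'} \<nu> z) = z"
      using inv_into_into[OF zz] f_inv_into_f[OF zz] by blast
  qed
  define g1 where "g1 = (\<lambda>x. inv_into {0..<card T'} \<nu> (\<phi>1 x))"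
  define g2 where "g2 = (\<lambda>x. inv_into {0..<card T'} \<nu> (g (\<phi>2 x)))"
  have inT1: "\<And>x. x \<in> fst A1 \<Longrightarrow> \<phi>1 x \<in> T'" unfolding T'_def using \<phi>1in by blast
  have inT2: "\<And>x. x \<in> fst A2 \<Longrightarrow> g (\<phi>2 x) \<in> T'" unfolding T'_def using \<phi>2in by blast
  have E1: "isom_emb g1 (fst A1) (snd A1) (fst B) (snd B)" unfolding isom_emb_def
  proof (intro conjI ballI)
    show "g1 ` fst A1 \<subseteq> fst B" unfolding g1_def B_def using inT1 \<nu>inv by auto
    fix x y assume xy: "x \<in> fst A1" "y \<in> fst A1"
    show "snd B (g1 x) (g1 y) = snd A1 x y" unfolding B_def g1_def using \<nu>inv inT1 xy \<phi>1d by simp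
  qed
  have E2: "isom_emb g2 (fst A2) (snd A2) (fst B) (snd B)" unfolding isom_emb_def
  proof (intro conjI ballI)
    show "g2 ` fst A2 \<subseteq> fst B" unfolding g2_def B_def using inT2 \<nu>inv by auto
    fix x y assume xy: "x \<in> fst A2" "y \<in> fst A2"
    have "\<phi>2 x \<in> D" "\<phi>2 y \<in> D" using \<phi>2in xy S2(1) by auto
    then have "e (g (\<phi>2 x)) (g (\<phi>2 y)) = snd A2 x y" using gd \<phi>2d xy by simp
    then show "snd B (g2 x) (g2 y) = snd A2 x y" unfolding B_def g2_def using \<nu>inv inT2 xy by simp
  qed
  have E3: "\<forall>x\<in>fst A. g1 (f1 x) = g2 (f2 x)"
  proof
    fix x assume x: "x \<in> fst A"
    have "g (u x) = h (u x)" using g(2) x by blast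
    also have "\<dots> = v x" using hu x by blast
    finally show "g1 (f1 x) = g2 (f2 x)" unfolding g1_def g2_def u_def v_def by simp
  qed
  show "\<exists>B\<in>C. \<exists>g1 g2. isom_emb g1 (fst A1) (snd A1) (fst B) (snd B) \<and>
          isom_emb g2 (fst A2) (snd A2) (fst B) (snd B) \<and> (\<forall>x\<in>fst A. g1 (f1 x) = g2 (f2 x))"
    using BC E1 E2 E3 by blast
qed

theorem lemma4:
  fixes C :: "fms set"
  assumes "ideal_fms C" and "C \<subseteq> age (UNIV :: real set) dR"
  shows "(\<forall>(D :: 'a set) e. homogeneous D e \<and> age D e = C \<longrightarrow> amalg2 C)
       \<and> (amalg2 C \<longrightarrow> (\<exists>(D :: real set) e. homogeneous D e \<and> age D e = C))
       \<and> (amalg2 C \<and> (\<exists>X\<in>C. card (fst X) = 3) \<longrightarrow>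
            (\<exists>G. additive_subgroup G \<and> homogeneous G dR \<and> age G dR = C))"
proof -
  have P1: "\<forall>(D :: 'a set) e. homogeneous D e \<and> age D e = C \<longrightarrow> amalg2 C"
    using part1 by blast
  have P3: "amalg2 C \<and> (\<exists>X\<in>C. card (fst X) = 3) \<longrightarrow>
            (\<exists>G. additive_subgroup G \<and> homogeneous G dR \<and> age G dR = C)"
    using part3[OF assms] by blast
  have P2: "amalg2 C \<longrightarrow> (\<exists>(D :: real set) e. homogeneous D e \<and> age D e = C)"
  proof
    assume am: "amalg2 C"
    show "\<exists>(D :: real set) e. homogeneous D e \<and> age D e = C"
    proof (cases "\<exists>X\<in>C. card (fst X) = 3")
      case True
      then obtain G where "homogeneous G dR" "age G dR = C" using part3[OF assms am] by blast
      then show ?thesis by blast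
    next
      case False
      then show ?thesis using small_case[OF assms] by blast
    qed
  qed
  show ?thesis using P1 P2 P3 by blast
qed

end
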